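(* Let $G$ be a subgroup of $\mathrm{V}(r,\mathbb R^*_+,\mathbb R)$ with $G\cap\mathrm{F}(r,\mathbb R^*_+,\mathbb R)=\mathrm{F}(r,\Lambda,A)=\mathrm{F}$. Let $a\in\mathrm{F}^\uparrow$ with $\mathrm{supp}(a)=(0,r)$, $\alpha_0\in(0,r)\cap A$, $\alpha_k=(\alpha_0)a^k$, and $b\in\mathrm{F}^\uparrow$ with $\mathrm{supp}(b)=(\alpha_0,\alpha_1)$. Then $C_G(a)=C_{\mathrm F}(a)$ and $C_G(\{a^{-k}ba^k\mid k\in\mathbb Z\})=C_{\mathrm F}(\{a^{-k}ba^k\mid k\in\mathbb Z\})$.
   Context: Admissible triple $(r,\Lambda,A)$: $r>0$, $\Lambda\le\mathbb R^*_+$ nontrivial, $A\subseteq\mathbb R$ additive subgroup with $r\in A$, $\Lambda A\subseteq A$. $\mathrm{V}(r,\Lambda,A)$ is the group of bijections of $[0,r)$ that are piecewise affine with finitely many cuts and singular points, right-continuous everywhere, slopes in $\Lambda$, cut/singular points and their images in $A$; $\mathrm{F}(r,\Lambda,A)$ is its subgroup of elements continuous in the usual topology. Maps act on the right. $\mathrm{F}^\uparrow=\{x\in\mathrm{F}\mid(t)x\ge t\ \forall t\}$; $\mathrm{supp}$ is the set of non-fixed points; $C_G(\cdot)$ denotes centralizer in $G$. *)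

theory Defs
  imports "HOL-Analysis.Analysis"
begin

text \<open>Elements of V(r,Lambda,A) are modelled as functions real => real that are the
identity outside [0,r). Maps act on the right, so the product x*y (first x, then y)
is the function y o x.\<close>

definition admissible :: "real \<Rightarrow> real set \<Rightarrow> real set \<Rightarrow> bool" where
  "admissible r \<Lambda> A \<longleftrightarrow>
     r > 0 \<and>
     \<Lambda> \<subseteq> {0<..} \<and> 1 \<in> \<Lambda> \<and> (\<forall>x\<in>\<Lambda>. \<forall>y\<in>\<Lambda>. x * y \<in> \<Lambda>) \<and> (\<forall>x\<in>\<Lambda>. inverse x \<in> \<Lambda>) \<and> \<Lambda> \<noteq> {1} \<and>
     0 \<in> A \<and> (\<forall>x\<in>A. \<forall>y\<in>A. x + y \<in> A) \<and> (\<forall>x\<in>A. - x \<in> A) \<and>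
     r \<in> A \<and> (\<forall>l\<in>\<Lambda>. \<forall>x\<in>A. l * x \<in> A)"

definition pw_affine :: "real \<Rightarrow> real set \<Rightarrow> real set \<Rightarrow> (real \<Rightarrow> real) \<Rightarrow> bool" where
  "pw_affine r \<Lambda> A f \<longleftrightarrow>
     (\<exists>S. finite S \<and> 0 \<in> S \<and> S \<subseteq> {0..<r} \<and> S \<subseteq> A \<and>
        (\<forall>s\<in>S. f s \<in> A \<and>
           (\<exists>l\<in>\<Lambda>. \<exists>c. \<forall>t. s \<le> t \<and> t < r \<and> (\<forall>u\<in>S. u \<le> s \<or> t < u) \<longrightarrow> f t = l * t + c)))"

definition Vgrp :: "real \<Rightarrow> real set \<Rightarrow> real set \<Rightarrow> (real \<Rightarrow> real) set" where
  "Vgrp r \<Lambda> A = {f. bij_betw f {0..<r} {0..<r} \<and> (\<forall>t. t \<notin> {0..<r} \<longrightarrow> f t = t)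
                     \<and> pw_affine r \<Lambda> A f}"

definition Fgrp :: "real \<Rightarrow> real set \<Rightarrow> real set \<Rightarrow> (real \<Rightarrow> real) set" where
  "Fgrp r \<Lambda> A = {f \<in> Vgrp r \<Lambda> A. continuous_on {0..<r} f}"

definition Fup :: "real \<Rightarrow> real set \<Rightarrow> real set \<Rightarrow> (real \<Rightarrow> real) set" where
  "Fup r \<Lambda> A = {f \<in> Fgrp r \<Lambda> A. \<forall>t. f t \<ge> t}"

definition supp :: "(real \<Rightarrow> real) \<Rightarrow> real set" where
  "supp f = {t. f t \<noteq> t}"

definition is_subgroup_of :: "(real \<Rightarrow> real) set \<Rightarrow> (real \<Rightarrow> real) set \<Rightarrow> bool" where
  "is_subgroup_of G H \<longleftrightarrow> G \<subseteq> H \<and> id \<in> G \<and> (\<forall>f\<in>G. \<forall>g\<in>G. f \<circ> g \<in> G) \<and> (\<forall>f\<in>G. inv f \<in> G)"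

definition zpow :: "(real \<Rightarrow> real) \<Rightarrow> int \<Rightarrow> (real \<Rightarrow> real)" where
  "zpow f k = (if k \<ge> 0 then f ^^ nat k else (inv f) ^^ nat (- k))"

definition centralizer :: "(real \<Rightarrow> real) set \<Rightarrow> (real \<Rightarrow> real) set \<Rightarrow> (real \<Rightarrow> real) set" where
  "centralizer G X = {g \<in> G. \<forall>x\<in>X. g \<circ> x = x \<circ> g}"

end

theory Submission
  imports Defs
begin


definition Hom :: "(real \<Rightarrow> real) \<Rightarrow> bool" where
  "Hom h \<longleftrightarrow> bij h \<and> strict_mono h"

lemma Hom_inv_f: "Hom h \<Longrightarrow> h (inv h y) = y"
  unfolding Hom_def by (meson bij_inv_eq_iff)
lemma Hom_f_inv: "Hom h \<Longrightarrow> inv h (h y) = y"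
  unfolding Hom_def by (simp add: bij_is_inj)
lemma Hom_less: "Hom h \<Longrightarrow> h x < h y \<longleftrightarrow> x < y"
  unfolding Hom_def by (simp add: strict_mono_less)
lemma Hom_le: "Hom h \<Longrightarrow> h x \<le> h y \<longleftrightarrow> x \<le> y"
  unfolding Hom_def by (simp add: strict_mono_less_eq)
lemma Hom_inj: "Hom h \<Longrightarrow> h x = h y \<longleftrightarrow> x = y"
  unfolding Hom_def by (meson bij_betw_imp_inj_on injD)

lemma Hom_inv: "Hom h \<Longrightarrow> Hom (inv h)"
  unfolding Hom_def
proof (intro conjI)
  assume h: "bij h \<and> strict_mono h"
  then show "bij (inv h)" by (simp add: bij_imp_bij_inv)
  show "strict_mono (inv h)"
  proof (rule strict_monoI)
    fix x y :: real assume "x < y"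
    then show "inv h x < inv h y"
      using Hom_less[of h "inv h x" "inv h y"] Hom_inv_f[of h] h unfolding Hom_def by auto
  qed
qed

lemma Hom_comp: "Hom f \<Longrightarrow> Hom g \<Longrightarrow> Hom (f \<circ> g)"
  unfolding Hom_def by (auto intro: bij_comp strict_monoI simp: strict_mono_less)

lemma Hom_id: "Hom id"
  unfolding Hom_def by (auto simp: strict_mono_def)

lemma Hom_funpow: "Hom f \<Longrightarrow> Hom (f ^^ n)"
  by (induction n) (auto simp: Hom_id Hom_comp)

lemma Hom_zpow: "Hom f \<Longrightarrow> Hom (zpow f k)"
  unfolding zpow_def by (auto simp: Hom_funpow Hom_inv)

lemma Hom_cont: assumes "Hom h" shows "isCont h x"
  unfolding isCont_def LIM_eq
proof (intro allI impI)
  fix e :: real assume e: "0 < e"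
  define lo where "lo = inv h (h x - e)"
  define hi where "hi = inv h (h x + e)"
  have hlo: "h lo = h x - e" "h hi = h x + e" using Hom_inv_f[OF assms] lo_def hi_def by auto
  have "h lo < h x" "h x < h hi" using hlo e by auto
  then have "lo < x" "x < hi" using Hom_less[OF assms] by auto
  show "\<exists>s>0. \<forall>y. y \<noteq> x \<and> norm (y - x) < s \<longrightarrow> norm (h y - h x) < e"
  proof (intro exI[of _ "min (x - lo) (hi - x)"] conjI allI impI)
    show "0 < min (x - lo) (hi - x)" using \<open>lo < x\<close> \<open>x < hi\<close> by simp
    fix y assume "y \<noteq> x \<and> norm (y - x) < min (x - lo) (hi - x)"
    then have "lo < y" "y < hi" by auto
    then have "h lo < h y" "h y < h hi" using Hom_less[OF assms] by auto
    then show "norm (h y - h x) < e" using hlo by auto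
  qed
qed

lemma funpow_inverse: fixes f g :: "real \<Rightarrow> real" assumes "\<And>x. f (g x) = x" shows "(f ^^ n) ((g ^^ n) x) = x"
proof (induction n arbitrary: x)
  case 0 then show ?case by simp
next
  case (Suc n)
  have "(f ^^ Suc n) ((g ^^ Suc n) x) = (f ^^ n) (f (g ((g ^^ n) x)))"
    by (subst funpow_Suc_right) (simp only: funpow.simps(2) comp_def)
  also have "\<dots> = x" using Suc assms by simp
  finally show ?case .
qed

lemma zpow_neg_nat: "zpow f (- int n) = inv f ^^ n"
  unfolding zpow_def by auto

lemma zpow_nat: "zpow f (int n) = f ^^ n"
  unfolding zpow_def by auto

lemma zpow_inverse:
  assumes "Hom f" shows "zpow f k (zpow f (- k) x) = x \<and> zpow f (- k) (zpow f k x) = x"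
proof -
  have A: "(f ^^ n) ((inv f ^^ n) x) = x" "(inv f ^^ n) ((f ^^ n) x) = x" for n x
    using funpow_inverse[of f "inv f"] funpow_inverse[of "inv f" f] Hom_inv_f[OF assms] Hom_f_inv[OF assms]
    by auto
  show ?thesis
  proof (cases "k \<ge> 0")
    case True
    define n where "n = nat k"
    have "k = int n" using True unfolding n_def by simp
    then show ?thesis
      using A by (simp add: zpow_nat zpow_neg_nat)
  next
    case False
    define n where "n = nat (- k)"
    have "k = - int n" using False unfolding n_def by simp
    then show ?thesis
      using A by (simp add: zpow_nat zpow_neg_nat)
  qed
qed

lemma zpow_succ:
  assumes "Hom f" shows "zpow f (k + 1) x = zpow f k (f x)"
proof (cases "k \<ge> 0")
  case True
  define n where "n = nat k"
  have "k = int n" using True unfolding n_def by simp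
  then have "k + 1 = int (Suc n)" by simp
  then show ?thesis using \<open>k = int n\<close> by (simp only: zpow_nat funpow_Suc_right) simp
next
  case False
  define n where "n = nat (- k - 1)"
  have n: "k = - int (Suc n)" using False unfolding n_def by simp
  then have "k + 1 = - int n" by simp
  then show ?thesis using n Hom_f_inv[OF assms]
    by (simp only: zpow_neg_nat funpow_Suc_right) simp
qed




lemma pw_pieces:
  assumes "pw_affine r \<Lambda> A f" "\<Lambda> \<subseteq> {0<..}"
  shows "\<exists>S. finite S \<and> (\<forall>t. 0 \<le> t \<and> t < r \<longrightarrow> (\<exists>s e l c. s \<le> t \<and> t < e \<and> e \<le> r
      \<and> (e \<in> S \<or> e = r) \<and> (t \<notin> S \<longrightarrow> s < t) \<and> (\<forall>u\<in>S. u \<le> t \<or> e \<le> u) \<and> l > 0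
      \<and> (\<forall>x. s \<le> x \<and> x < e \<longrightarrow> f x = l * x + c)))"
proof -
  have "\<exists>S. finite S \<and> 0 \<in> S \<and> S \<subseteq> {0..<r} \<and> S \<subseteq> A \<and>
        (\<forall>s\<in>S. f s \<in> A \<and>
           (\<exists>l\<in>\<Lambda>. \<exists>c. \<forall>t. s \<le> t \<and> t < r \<and> (\<forall>u\<in>S. u \<le> s \<or> t < u) \<longrightarrow> f t = l * t + c))"
    using assms(1) unfolding pw_affine_def .
  then obtain S where H: "finite S \<and> 0 \<in> S \<and> S \<subseteq> {0..<r} \<and> S \<subseteq> A \<and>
        (\<forall>s\<in>S. f s \<in> A \<and>
           (\<exists>l\<in>\<Lambda>. \<exists>c. \<forall>t. s \<le> t \<and> t < r \<and> (\<forall>u\<in>S. u \<le> s \<or> t < u) \<longrightarrow> f t = l * t + c))" ..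
  have S: "finite S" "0 \<in> S" "S \<subseteq> {0..<r}" using H by simp_all
  have P: "\<exists>l\<in>\<Lambda>. \<exists>c. \<forall>t. s \<le> t \<and> t < r \<and> (\<forall>u\<in>S. u \<le> s \<or> t < u) \<longrightarrow> f t = l * t + c"
    if "s \<in> S" for s
  proof -
    have "\<forall>s\<in>S. f s \<in> A \<and>
           (\<exists>l\<in>\<Lambda>. \<exists>c. \<forall>t. s \<le> t \<and> t < r \<and> (\<forall>u\<in>S. u \<le> s \<or> t < u) \<longrightarrow> f t = l * t + c)"
      using H by (rule conjunct2[OF conjunct2[OF conjunct2[OF conjunct2]]])
    from bspec[OF this that] show ?thesis by (rule conjunct2)
  qed
  show ?thesis
  proof (intro exI[of _ S] conjI allI impI)
    show "finite S" by fact
    fix t :: real assume t: "0 \<le> t \<and> t < r"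
    define s where "s = Max {u\<in>S. u \<le> t}"
    define e where "e = Min ({u\<in>S. t < u} \<union> {r})"
    have fin1: "finite {u\<in>S. u \<le> t}" and ne1: "{u\<in>S. u \<le> t} \<noteq> {}" using S t by auto
    have fin2: "finite ({u\<in>S. t < u} \<union> {r})" using S by auto
    have sS: "s \<in> S" "s \<le> t" using Max_in[OF fin1 ne1] unfolding s_def by auto
    have sge: "u \<le> s" if "u \<in> S" "u \<le> t" for u using Max_ge[OF fin1] that unfolding s_def by auto
    have eQ: "e \<in> {u\<in>S. t < u} \<union> {r}" unfolding e_def by (rule Min_in[OF fin2]) auto
    have ele: "e \<le> u" if "u \<in> {u\<in>S. t < u} \<union> {r}" for u using Min_le[OF fin2 that] unfolding e_def .
    obtain l c where l: "l \<in> \<Lambda>" and lc: "\<forall>x. s \<le> x \<and> x < r \<and> (\<forall>u\<in>S. u \<le> s \<or> x < u) \<longrightarrow> f x = l * x + c"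
      using P[OF sS(1)] by (elim bexE exE)
    show "\<exists>s e l c. s \<le> t \<and> t < e \<and> e \<le> r
      \<and> (e \<in> S \<or> e = r) \<and> (t \<notin> S \<longrightarrow> s < t) \<and> (\<forall>u\<in>S. u \<le> t \<or> e \<le> u) \<and> l > 0
      \<and> (\<forall>x. s \<le> x \<and> x < e \<longrightarrow> f x = l * x + c)"
    proof (rule exI[of _ s], rule exI[of _ e], rule exI[of _ l], rule exI[of _ c], intro conjI)
      show "s \<le> t" by fact
      show "t < e" using eQ t by auto
      show "e \<le> r" using ele[of r] by simp
      show "e \<in> S \<or> e = r" using eQ by auto
      show "t \<notin> S \<longrightarrow> s < t" using sS by (cases "s = t") auto
      show "\<forall>u\<in>S. u \<le> t \<or> e \<le> u"
      proof
        fix u assume u: "u \<in> S"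
        show "u \<le> t \<or> e \<le> u"
        proof (cases "u \<le> t")
          case False then show ?thesis using ele[of u] u by simp
        qed simp
      qed
      show "l > 0" using l assms(2) by auto
      show "\<forall>x. s \<le> x \<and> x < e \<longrightarrow> f x = l * x + c"
      proof (intro allI impI)
        fix x assume x: "s \<le> x \<and> x < e"
        have "x < r" using x ele[of r] by simp
        moreover have "\<forall>u\<in>S. u \<le> s \<or> x < u"
        proof
          fix u assume "u \<in> S"
          show "u \<le> s \<or> x < u"
          proof (cases "u \<le> t")
            case True then show ?thesis using sge \<open>u\<in>S\<close> by auto
          next
            case False then have "e \<le> u" using ele[of u] \<open>u\<in>S\<close> by simp
            then show ?thesis using x by auto
          qed
        qed
        ultimately show "f x = l * x + c" using lc x by simp
      qed
    qed
  qed
qed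

lemma V_inj: assumes f: "f \<in> Vgrp r \<Lambda> A" shows "inj f"
proof (rule injI)
  fix x y assume eq: "f x = f y"
  have b: "bij_betw f {0..<r} {0..<r}" and o: "\<And>t. t \<notin> {0..<r} \<Longrightarrow> f t = t"
    using f unfolding Vgrp_def by auto
  have im: "t \<in> {0..<r} \<Longrightarrow> f t \<in> {0..<r}" for t using b bij_betwE by blast
  have io: "inj_on f {0..<r}" using b by (rule bij_betw_imp_inj_on)
  show "x = y"
  proof (cases "x \<in> {0..<r}"; cases "y \<in> {0..<r}")
    assume "x \<in> {0..<r}" "y \<in> {0..<r}" then show ?thesis
      using inj_onD[OF io eq] by simp
  next
    assume X: "x \<in> {0..<r}" and Y: "y \<notin> {0..<r}"
    have "f x \<in> {0..<r}" by (rule im[OF X])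
    moreover have "f y = y" by (rule o[OF Y])
    ultimately have "y \<in> {0..<r}" using eq by metis
    with Y show ?thesis by contradiction
  next
    assume X: "x \<notin> {0..<r}" and Y: "y \<in> {0..<r}"
    have "f y \<in> {0..<r}" by (rule im[OF Y])
    moreover have "f x = x" by (rule o[OF X])
    ultimately have "x \<in> {0..<r}" using eq by metis
    with X show ?thesis by contradiction
  next
    assume X: "x \<notin> {0..<r}" and Y: "y \<notin> {0..<r}"
    have "f x = x" by (rule o[OF X])
    moreover have "f y = y" by (rule o[OF Y])
    ultimately show ?thesis using eq by metis
  qed
qed

lemma F_Hom:
  assumes f: "f \<in> Fgrp r \<Lambda> A" and ge: "\<forall>t. f t \<ge> t" and f0: "f 0 = 0"
  shows "Hom f"
proof -
  have fV: "f \<in> Vgrp r \<Lambda> A" and cont: "continuous_on {0..<r} f" using f unfolding Fgrp_def by auto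
  have b: "bij_betw f {0..<r} {0..<r}" and o: "\<And>t. t \<notin> {0..<r} \<Longrightarrow> f t = t"
    using fV unfolding Vgrp_def by auto
  have im: "t \<in> {0..<r} \<Longrightarrow> f t \<in> {0..<r}" for t using b bij_betwE by blast
  have sm: "strict_mono f"
  proof (rule strict_monoI)
    fix x y :: real assume xy: "x < y"
    show "f x < f y"
    proof -
      consider "y < 0" | "x < 0" "0 \<le> y" | "r \<le> x" | "x < r" "r \<le> y" | "0 \<le> x" "y < r" by linarith
      then show ?thesis
      proof cases
        case 1 then show ?thesis using o xy by simp
      next
        case 2 then show ?thesis using o ge[rule_format, of y] by (simp add: order.strict_trans2)
      next
        case 3 then show ?thesis using o xy by simp
      next
        case 4 then have "f x < r" using o im by (cases "0 \<le> x") auto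
        then show ?thesis using 4 o by simp
      next
        case 5
        show ?thesis
        proof (cases "x = 0")
          case True then show ?thesis using f0 ge[rule_format, of y] xy by simp
        next
          case False
          then have x0: "0 < x" using 5 by simp
          have sub: "{0..y} \<subseteq> {0..<r}" using 5 by auto
          have c: "continuous_on {0..y} f" by (rule continuous_on_subset[OF cont sub])
          have i: "inj_on f {0..y}" by (rule inj_on_subset[OF bij_betw_imp_inj_on[OF b] sub])
          from continuous_inj_imp_mono[OF x0 xy c i]
          show ?thesis using ge[rule_format, of x] x0 f0 by auto
        qed
      qed
    qed
  qed
  have "surj f"
  proof -
    have "y \<in> range f" for y
    proof (cases "y \<in> {0..<r}")
      case True
      have "f ` {0..<r} = {0..<r}" using b by (simp add: bij_betw_def)
      then show ?thesis using True by blast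
    next
      case False then have "f y = y" using o by simp
      then show ?thesis by (metis rangeI)
    qed
    then show ?thesis by auto
  qed
  then show ?thesis unfolding Hom_def bij_def using sm strict_mono_imp_inj_on by blast
qed

lemma V_cont:
  assumes g: "g \<in> Vgrp r {0<..} UNIV" and c: "\<And>t. 0 < t \<Longrightarrow> t < r \<Longrightarrow> isCont g t"
  shows "continuous_on {0..<r} g"
proof -
  have "pw_affine r {0<..} UNIV g" using g unfolding Vgrp_def by auto
  from pw_pieces[OF this] obtain S where
    P: "\<forall>t. 0 \<le> t \<and> t < r \<longrightarrow> (\<exists>s e l c. s \<le> t \<and> t < e \<and> e \<le> r
      \<and> (e \<in> S \<or> e = r) \<and> (t \<notin> S \<longrightarrow> s < t) \<and> (\<forall>u\<in>S. u \<le> t \<or> e \<le> u) \<and> l > 0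
      \<and> (\<forall>x. s \<le> x \<and> x < e \<longrightarrow> g x = l * x + c))" by auto
  show ?thesis unfolding continuous_on_eq_continuous_within
  proof
    fix t assume t: "t \<in> {0..<r}"
    show "continuous (at t within {0..<r}) g"
    proof (cases "t = 0")
      case False
      then have "isCont g t" using c t by auto
      then show ?thesis by (rule continuous_at_imp_continuous_at_within)
    next
      case True
      obtain s e l c where se: "s \<le> 0" "0 < e" "e \<le> r"
        and aff: "\<forall>x. s \<le> x \<and> x < e \<longrightarrow> g x = l * x + c"
      proof -
        have "0 \<le> t \<and> t < r" using t by auto
        from P[rule_format, OF this] show ?thesis using True that by blast
      qed
      have "continuous_on {0..<e} (\<lambda>x. l * x + c)" by (intro continuous_intros)
      then have "continuous_on {0..<e} g" by (rule continuous_on_eq) (use aff se in auto)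
      then have "continuous (at 0 within {0..<e}) g" using se
        by (simp add: continuous_on_eq_continuous_within)
      moreover have "at 0 within {0..<e} = at 0 within {0..<r}"
        by (rule at_within_nhd[of _ "{..<e}"]) (use se in auto)
      ultimately show ?thesis using True by simp
    qed
  qed
qed

lemma disc_finite:
  assumes g: "g \<in> Vgrp r {0<..} UNIV"
  shows "finite {t. 0 < t \<and> t < r \<and> \<not> isCont g t}"
proof -
  have "pw_affine r {0<..} UNIV g" using g unfolding Vgrp_def by auto
  from pw_pieces[OF this] obtain S where S: "finite S" and
    P: "\<forall>t. 0 \<le> t \<and> t < r \<longrightarrow> (\<exists>s e l c. s \<le> t \<and> t < e \<and> e \<le> r
      \<and> (e \<in> S \<or> e = r) \<and> (t \<notin> S \<longrightarrow> s < t) \<and> (\<forall>u\<in>S. u \<le> t \<or> e \<le> u) \<and> l > 0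
      \<and> (\<forall>x. s \<le> x \<and> x < e \<longrightarrow> g x = l * x + c))" by auto
  have "{t. 0 < t \<and> t < r \<and> \<not> isCont g t} \<subseteq> S"
  proof
    fix t assume t: "t \<in> {t. 0 < t \<and> t < r \<and> \<not> isCont g t}"
    show "t \<in> S"
    proof (rule ccontr)
      assume "t \<notin> S"
      then obtain s e l c where se: "s < t" "t < e"
        and aff: "\<forall>x. s \<le> x \<and> x < e \<longrightarrow> g x = l * x + c"
      proof -
        have "0 \<le> t \<and> t < r" using t by auto
        from P[rule_format, OF this] show ?thesis using \<open>t \<notin> S\<close> that by blast
      qed
      have "eventually (\<lambda>x. g x = l * x + c) (nhds t)"
        unfolding eventually_nhds using se aff
        by (intro exI[of _ "{s<..<e}"]) auto
      then have "isCont g t \<longleftrightarrow> isCont (\<lambda>x. l * x + c) t" by (rule isCont_cong)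
      then show False using t by auto
    qed
  qed
  then show ?thesis using S finite_subset by blast
qed

lemma comm_cont:
  assumes h: "Hom h" and comm: "g \<circ> h = h \<circ> g" and c: "isCont g (h s)"
  shows "isCont g s"
proof -
  have eq: "g = (\<lambda>x. inv h (g (h x)))"
  proof
    fix x
    have "g (h x) = h (g x)" using fun_cong[OF comm, of x] by simp
    then show "g x = inv h (g (h x))" using Hom_f_inv[OF h] by simp
  qed
  have c1: "isCont (\<lambda>x. g (h x)) s" by (rule isCont_o2[OF Hom_cont[OF h] c])
  have c2: "isCont (\<lambda>x. inv h (g (h x))) s" by (rule isCont_o2[OF c1 Hom_cont[OF Hom_inv[OF h]]])
  from c2 show ?thesis by (simp only: eq[symmetric])
qed

lemma no_disc:
  assumes fin: "finite D" and inv: "\<And>x. x \<in> D \<Longrightarrow> h x \<noteq> x \<Longrightarrow> h x \<in> D"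
    and h: "Hom h" and ge: "\<And>x. x \<le> h x"
  shows "D \<inter> supp h = {}"
proof (rule ccontr)
  assume ne: "D \<inter> supp h \<noteq> {}"
  define m where "m = Max (D \<inter> supp h)"
  have fin2: "finite (D \<inter> supp h)" using fin by simp
  have m: "m \<in> D" "h m \<noteq> m" using Max_in[OF fin2 ne] unfolding m_def supp_def by auto
  have "h (h m) \<noteq> h m" using m Hom_inj[OF h] by simp
  then have "h m \<in> D \<inter> supp h" using inv m unfolding supp_def by auto
  then have "h m \<le> m" using Max_ge[OF fin2] unfolding m_def by simp
  then show False using ge[of m] m by simp
qed




lemma tiling:
  assumes a: "Hom a" and ge: "\<And>x. x \<le> a x" and supp: "supp a = {0<..<r}"
    and \<alpha>0: "0 < \<alpha>0" "\<alpha>0 < r" and t: "0 < t" "t < r"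
  shows "\<exists>k. zpow a k \<alpha>0 \<le> t \<and> t < zpow a (k + 1) \<alpha>0"
proof -
  have fix_out: "a L = L \<Longrightarrow> 0 < L \<Longrightarrow> L < r \<Longrightarrow> False" for L
  proof -
    assume "a L = L" "0 < L" "L < r"
    then have "L \<in> supp a" using supp by simp
    then show False using \<open>a L = L\<close> unfolding supp_def by simp
  qed
  have up: "\<exists>n. t < (a ^^ n) \<alpha>0"
  proof (rule ccontr)
    assume "\<not> ?thesis"
    then have bd: "\<And>n. (a ^^ n) \<alpha>0 \<le> t" by (simp add: not_less)
    define X where "X n = (a ^^ n) \<alpha>0" for n
    have XS: "X (Suc n) = a (X n)" for n unfolding X_def by simp
    have inc: "incseq X" by (rule incseq_SucI) (simp add: XS ge)
    have bda: "bdd_above (range X)" unfolding X_def by (rule bdd_aboveI[where M=t]) (use bd in auto)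
    define L where "L = (SUP i. X i)"
    have lim: "X \<longlonglongrightarrow> L" unfolding L_def by (rule LIMSEQ_incseq_SUP[OF bda inc])
    have "L \<le> t" using LIMSEQ_le_const2[OF lim] bd unfolding X_def by auto
    moreover have "\<alpha>0 \<le> L" using LIMSEQ_le_const[OF lim] incseqD[OF inc, of 0] unfolding X_def by force
    moreover have "a L = L"
    proof -
      have "(\<lambda>n. a (X n)) \<longlonglongrightarrow> a L" by (rule isCont_tendsto_compose[OF Hom_cont[OF a] lim])
      moreover have "(\<lambda>n. X (Suc n)) \<longlonglongrightarrow> L" using lim by (rule LIMSEQ_Suc)
      ultimately show ?thesis using XS LIMSEQ_unique by auto
    qed
    ultimately show False using \<alpha>0 t by (intro fix_out[of L]) auto
  qed
  have ainv_le: "inv a y \<le> y" for y using ge[of "inv a y"] Hom_inv_f[OF a] by simp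
  have down: "\<exists>m. (inv a ^^ m) \<alpha>0 \<le> t"
  proof (rule ccontr)
    assume "\<not> ?thesis"
    then have bd: "\<And>n. t \<le> (inv a ^^ n) \<alpha>0" by (simp add: not_le less_imp_le)
    define Y where "Y n = (inv a ^^ n) \<alpha>0" for n
    have YS: "Y (Suc n) = inv a (Y n)" for n unfolding Y_def by simp
    have dec: "decseq Y" by (rule decseq_SucI) (simp add: YS ainv_le)
    have bdb: "bdd_below (range Y)" unfolding Y_def by (rule bdd_belowI[where m=t]) (use bd in auto)
    define L where "L = (INF i. Y i)"
    have lim: "Y \<longlonglongrightarrow> L" unfolding L_def by (rule LIMSEQ_decseq_INF[OF bdb dec])
    have "t \<le> L" using LIMSEQ_le_const[OF lim] bd unfolding Y_def by auto
    moreover have "L \<le> \<alpha>0" using LIMSEQ_le_const2[OF lim] decseqD[OF dec, of 0] unfolding Y_def by force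
    moreover have "a L = L"
    proof -
      have "(\<lambda>n. a (Y (Suc n))) \<longlonglongrightarrow> a L"
        by (rule isCont_tendsto_compose[OF Hom_cont[OF a] LIMSEQ_Suc[OF lim]])
      moreover have "(\<lambda>n. a (Y (Suc n))) = Y" using YS Hom_inv_f[OF a] by auto
      ultimately show ?thesis using lim LIMSEQ_unique by auto
    qed
    ultimately show False using \<alpha>0 t by (intro fix_out[of L]) auto
  qed
  obtain n where n: "t < (a ^^ n) \<alpha>0" using up by auto
  obtain m where m: "(inv a ^^ m) \<alpha>0 \<le> t" using down by auto
  define K where "K = {j \<in> {- int m..int n}. zpow a j \<alpha>0 \<le> t}"
  have finK: "finite K" unfolding K_def by (rule finite_subset[OF _ finite_atLeastAtMost_int]) auto
  have mK: "- int m \<in> K" unfolding K_def using m by (simp add: zpow_neg_nat)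
  then have neK: "K \<noteq> {}" by auto
  define k where "k = Max K"
  have kK: "k \<in> K" unfolding k_def by (rule Max_in[OF finK neK])
  have kmax: "j \<in> K \<Longrightarrow> j \<le> k" for j unfolding k_def by (rule Max_ge[OF finK])
  show ?thesis
  proof (intro exI[of _ k] conjI)
    show "zpow a k \<alpha>0 \<le> t" using kK unfolding K_def by auto
    show "t < zpow a (k + 1) \<alpha>0"
    proof (cases "k + 1 \<le> int n")
      case True
      then have "k + 1 \<in> {- int m..int n}" using kK unfolding K_def by auto
      then show ?thesis using kmax[of "k+1"] unfolding K_def by force
    next
      case False
      then have "k = int n" using kK unfolding K_def by auto
      then show ?thesis using kK n unfolding K_def by (auto simp: zpow_nat)
    qed
  qed
qed




lemma supp_comm:
  assumes h: "Hom h" and comm: "g \<circ> h = h \<circ> g" and ginj: "inj g" and x: "x \<in> supp h"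
  shows "g x \<in> supp h"
proof -
  have "h (g x) = g (h x)" using fun_cong[OF comm, of x] by simp
  moreover have "g (h x) \<noteq> g x" using x ginj unfolding supp_def by (auto dest: injD)
  ultimately show ?thesis unfolding supp_def by auto
qed

lemma supp_self:
  assumes h: "Hom h" and x: "x \<in> supp h" shows "h x \<in> supp h"
  using x Hom_inj[OF h, of "h x" x] unfolding supp_def by auto

lemma alpha_cont:
  fixes g bb bk :: "real \<Rightarrow> real"
  assumes S: "finite S" and P: "\<forall>t. 0 \<le> t \<and> t < r \<longrightarrow> (\<exists>s e l c. s \<le> t \<and> t < e \<and> e \<le> r
      \<and> (e \<in> S \<or> e = r) \<and> (t \<notin> S \<longrightarrow> s < t) \<and> (\<forall>u\<in>S. u \<le> t \<or> e \<le> u) \<and> l > 0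
      \<and> (\<forall>x. s \<le> x \<and> x < e \<longrightarrow> g x = l * x + c))"
    and ab: "0 < \<beta>" "\<beta> < \<alpha>" "\<alpha> < \<gamma>" "\<gamma> \<le> r"
    and ginj: "inj g"
    and bb: "Hom bb" "supp bb = {\<beta><..<\<alpha>}" "g \<circ> bb = bb \<circ> g"
    and bk: "Hom bk" "supp bk = {\<alpha><..<\<gamma>}" "g \<circ> bk = bk \<circ> g"
  shows "isCont g \<alpha>"
proof -
  have gbb: "g (bb x) = bb (g x)" for x using fun_cong[OF bb(3), of x] by simp
  have gbk: "g (bk x) = bk (g x)" for x using fun_cong[OF bk(3), of x] by simp
  have inbb: "g x \<in> {\<beta><..<\<alpha>}" if "x \<in> {\<beta><..<\<alpha>}" for x
    using supp_comm[OF bb(1) bb(3) ginj] that bb(2) by auto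
  have inbk: "g x \<in> {\<alpha><..<\<gamma>}" if "x \<in> {\<alpha><..<\<gamma>}" for x
    using supp_comm[OF bk(1) bk(3) ginj] that bk(2) by auto
  obtain s e l c where se: "s \<le> \<alpha>" "\<alpha> < e" and l: "l > 0"
    and aff: "\<forall>x. s \<le> x \<and> x < e \<longrightarrow> g x = l * x + c"
  proof -
    have "0 \<le> \<alpha> \<and> \<alpha> < r" using ab by auto
    from P[rule_format, OF this] show ?thesis using that by blast
  qed
  define m where "m = min e \<gamma>"
  have m: "\<alpha> < m" using se ab unfolding m_def by auto
  have ev1: "eventually (\<lambda>x. x \<in> {\<alpha><..<m}) (at_right \<alpha>)" by (rule eventually_at_right_real[OF m])
  have eqr: "eventually (\<lambda>x. g x = l * x + c) (at_right \<alpha>)"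
    by (rule eventually_mono[OF ev1]) (use aff se m_def in auto)
  have ga: "g \<alpha> = l * \<alpha> + c" using aff se by auto
  have affr: "((\<lambda>x. l * x + c) \<longlongrightarrow> l * \<alpha> + c) (at_right \<alpha>)" by (intro tendsto_intros)
  have "\<alpha> \<le> l * \<alpha> + c"
  proof (rule tendsto_lowerbound[OF affr])
    show "eventually (\<lambda>x. \<alpha> \<le> l * x + c) (at_right \<alpha>)"
      by (rule eventually_mono[OF ev1]) (use aff se m_def inbk in fastforce)
  qed simp
  moreover have "l * \<alpha> + c < \<gamma>"
  proof -
    define x where "x = (\<alpha> + m) / 2"
    have x: "x \<in> {\<alpha><..<m}" using m unfolding x_def by auto
    then have "g x < \<gamma>" using inbk m_def by auto
    moreover have "g x = l * x + c" using aff x se m_def by auto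
    moreover have "l * \<alpha> < l * x" using l x by auto
    ultimately show ?thesis by auto
  qed
  moreover have "bk (g \<alpha>) = g \<alpha>"
  proof -
    have "bk \<alpha> = \<alpha>" using bk(2) unfolding supp_def by auto
    then show ?thesis using gbk[of \<alpha>] by simp
  qed
  ultimately have gfix: "g \<alpha> = \<alpha>" using ga bk(2) unfolding supp_def by force
  have right: "(g \<longlongrightarrow> \<alpha>) (at_right \<alpha>)"
    using affr ga gfix tendsto_cong[OF eqr] by simp
  define M where "M = insert ((\<beta> + \<alpha>) / 2) {u\<in>S. u < \<alpha>}"
  have finM: "finite M" using S unfolding M_def by auto
  define t0 where "t0 = Max M"
  have t0M: "t0 \<in> M" unfolding t0_def by (rule Max_in[OF finM]) (simp add: M_def)
  have t0ge: "u \<in> M \<Longrightarrow> u \<le> t0" for u unfolding t0_def by (rule Max_ge[OF finM])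
  have t0: "\<beta> < t0" "t0 < \<alpha>"
    using t0ge[of "(\<beta> + \<alpha>) / 2"] t0M ab unfolding M_def by auto
  obtain s' e' l' c' where se': "s' \<le> t0" "t0 < e'" "e' \<le> r" "e' \<in> S \<or> e' = r"
    and Su: "\<forall>u\<in>S. u \<le> t0 \<or> e' \<le> u" and l': "l' > 0"
    and aff': "\<forall>x. s' \<le> x \<and> x < e' \<longrightarrow> g x = l' * x + c'"
  proof -
    have "0 \<le> t0 \<and> t0 < r" using ab t0 by auto
    from P[rule_format, OF this] show ?thesis using that by blast
  qed
  have ae: "\<alpha> \<le> e'"
  proof (rule ccontr)
    assume "\<not> \<alpha> \<le> e'"
    then have "e' < \<alpha>" by simp
    then have "e' \<in> S" using se' ab by auto
    then have "e' \<in> M" using \<open>e' < \<alpha>\<close> unfolding M_def by auto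
    then show False using t0ge se' by fastforce
  qed
  define L where "L = l' * \<alpha> + c'"
  have ev2: "eventually (\<lambda>x. x \<in> {t0<..<\<alpha>}) (at_left \<alpha>)" by (rule eventually_at_left_real[OF t0(2)])
  have eql: "eventually (\<lambda>x. g x = l' * x + c') (at_left \<alpha>)"
    by (rule eventually_mono[OF ev2]) (use aff' se' ae in auto)
  have affl: "((\<lambda>x. l' * x + c') \<longlongrightarrow> L) (at_left \<alpha>)" unfolding L_def by (intro tendsto_intros)
  then have gL: "(g \<longlongrightarrow> L) (at_left \<alpha>)" using tendsto_cong[OF eql] by simp
  have Lle: "L \<le> \<alpha>"
  proof (rule tendsto_upperbound[OF gL])
    show "eventually (\<lambda>x. g x \<le> \<alpha>) (at_left \<alpha>)"
    proof (rule eventually_mono[OF ev2])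
      fix x assume "x \<in> {t0<..<\<alpha>}"
      then have "x \<in> {\<beta><..<\<alpha>}" using t0 by auto
      from inbb[OF this] show "g x \<le> \<alpha>" by auto
    qed
  qed simp
  have Lgt: "\<beta> < L"
  proof -
    define x where "x = (t0 + \<alpha>) / 2"
    have x: "x \<in> {t0<..<\<alpha>}" using t0 unfolding x_def by auto
    then have "\<beta> < g x" using inbb t0 by auto
    moreover have "g x = l' * x + c'" using aff' x se' ae by auto
    moreover have "l' * x < l' * \<alpha>" using l' x by auto
    ultimately show ?thesis unfolding L_def by auto
  qed
  have bbF: "filterlim bb (at_left \<alpha>) (at_left \<alpha>)"
    unfolding filterlim_at
  proof
    have ev3: "eventually (\<lambda>x. x \<in> {\<beta><..<\<alpha>}) (at_left \<alpha>)" by (rule eventually_at_left_real[OF ab(2)])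
    show "eventually (\<lambda>x. bb x \<in> {..<\<alpha>} \<and> bb x \<noteq> \<alpha>) (at_left \<alpha>)"
    proof (rule eventually_mono[OF ev3])
      fix x assume "x \<in> {\<beta><..<\<alpha>}"
      then have "x \<in> supp bb" using bb(2) by simp
      then have "bb x \<in> supp bb" by (rule supp_self[OF bb(1)])
      then show "bb x \<in> {..<\<alpha>} \<and> bb x \<noteq> \<alpha>" using bb(2) by auto
    qed
    have "bb \<alpha> = \<alpha>" using bb(2) unfolding supp_def by auto
    then have "(bb \<longlongrightarrow> \<alpha>) (at \<alpha>)" using Hom_cont[OF bb(1), of \<alpha>] unfolding isCont_def by simp
    then show "(bb \<longlongrightarrow> \<alpha>) (at_left \<alpha>)" by (rule tendsto_mono[OF at_le, rotated]) simp
  qed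
  have l1: "((\<lambda>x. g (bb x)) \<longlongrightarrow> L) (at_left \<alpha>)" by (rule filterlim_compose[OF gL bbF])
  have l2: "((\<lambda>x. bb (g x)) \<longlongrightarrow> bb L) (at_left \<alpha>)" by (rule isCont_tendsto_compose[OF Hom_cont[OF bb(1)] gL])
  have l2': "((\<lambda>x. g (bb x)) \<longlongrightarrow> bb L) (at_left \<alpha>)" using l2 by (simp only: gbb)
  have "at_left \<alpha> \<noteq> bot" by simp
  from tendsto_unique[OF this l1 l2'] have LbL: "L = bb L" .
  have "L = \<alpha>"
  proof (rule ccontr)
    assume "L \<noteq> \<alpha>"
    then have "L \<in> supp bb" using Lle Lgt bb(2) by auto
    then show False using LbL unfolding supp_def by simp
  qed
  then have left: "(g \<longlongrightarrow> \<alpha>) (at_left \<alpha>)" using gL by simp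
  have "(g \<longlongrightarrow> g \<alpha>) (at \<alpha>)" using filterlim_split_at[OF left right] gfix by simp
  then show ?thesis unfolding isCont_def .
qed




lemma zpow_fix:
  assumes a: "Hom a" and y: "a y = y" shows "zpow a k y = y"
proof -
  have p: "(f ^^ n) y = y" if "f y = y" for f :: "real \<Rightarrow> real" and n
    using that by (induction n) auto
  have "inv a y = y" using Hom_f_inv[OF a, of y] y by simp
  then show ?thesis unfolding zpow_def using p y by auto
qed

theorem lemma4p7:
  fixes r :: real and \<Lambda> A :: "real set" and G :: "(real \<Rightarrow> real) set"
    and a b :: "real \<Rightarrow> real" and \<alpha>0 :: real
  assumes adm: "admissible r \<Lambda> A"
    and G: "is_subgroup_of G (Vgrp r {0<..} UNIV)"
    and GF: "G \<inter> Fgrp r {0<..} UNIV = Fgrp r \<Lambda> A"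
    and a: "a \<in> Fup r \<Lambda> A" and supp_a: "supp a = {0<..<r}"
    and \<alpha>0: "\<alpha>0 \<in> {0<..<r} \<inter> A"
    and b: "b \<in> Fup r \<Lambda> A" and supp_b: "supp b = {\<alpha>0<..<a \<alpha>0}"
  shows "centralizer G {a} = centralizer (Fgrp r \<Lambda> A) {a}
    \<and> centralizer G {zpow a k \<circ> b \<circ> zpow a (- k) | k. True}
        = centralizer (Fgrp r \<Lambda> A) {zpow a k \<circ> b \<circ> zpow a (- k) | k. True}"
proof -
  define F where "F = Fgrp r \<Lambda> A"
  have FG: "F \<subseteq> G" using GF unfolding F_def by auto
  have GV: "G \<subseteq> Vgrp r {0<..} UNIV" using G unfolding is_subgroup_of_def by auto
  have toF: "g \<in> F" if g: "g \<in> G" and c: "\<And>t. 0 < t \<Longrightarrow> t < r \<Longrightarrow> isCont g t" for g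
  proof -
    have gV: "g \<in> Vgrp r {0<..} UNIV" using g GV by auto
    have "continuous_on {0..<r} g" by (rule V_cont[OF gV c])
    then have "g \<in> Fgrp r {0<..} UNIV" using gV unfolding Fgrp_def by auto
    then show ?thesis using g GF unfolding F_def by auto
  qed
  have cent_sub: "centralizer F X \<subseteq> centralizer G X" for X
    using FG unfolding centralizer_def by auto
  have aF: "a \<in> Fgrp r \<Lambda> A" and age: "\<And>t. t \<le> a t" using a unfolding Fup_def by auto
  have a0: "a 0 = 0" using supp_a unfolding supp_def by auto
  have ar: "a r = r" using supp_a unfolding supp_def by auto
  have Ha: "Hom a" using F_Hom[OF aF] age a0 by auto
  have \<alpha>0': "0 < \<alpha>0" "\<alpha>0 < r" using \<alpha>0 by auto
  have bF: "b \<in> Fgrp r \<Lambda> A" and bge: "\<And>t. t \<le> b t" using b unfolding Fup_def by auto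
  have b0: "b 0 = 0"
  proof -
    have "0 \<notin> supp b" using supp_b \<alpha>0' by simp
    then show ?thesis unfolding supp_def by simp
  qed
  have Hb: "Hom b" using F_Hom[OF bF] bge b0 by auto
  have inv_disc: "x \<in> {t. 0 < t \<and> t < r \<and> \<not> isCont g t} \<Longrightarrow> h x \<noteq> x \<Longrightarrow>
      h x \<in> {t. 0 < t \<and> t < r \<and> \<not> isCont g t}"
    if "Hom h" "g \<circ> h = h \<circ> g" "supp h \<subseteq> {0<..<r}" for g h x
    using supp_self[OF that(1), of x] comm_cont[OF that(1,2), of x] that(3) unfolding supp_def by auto
  have P1: "centralizer G {a} = centralizer F {a}"
  proof
    show "centralizer F {a} \<subseteq> centralizer G {a}" by (rule cent_sub)
    show "centralizer G {a} \<subseteq> centralizer F {a}"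
    proof
      fix g assume "g \<in> centralizer G {a}"
      then have g: "g \<in> G" and comm: "g \<circ> a = a \<circ> g" unfolding centralizer_def by auto
      have gV: "g \<in> Vgrp r {0<..} UNIV" using g GV by auto
      have D: "{t. 0 < t \<and> t < r \<and> \<not> isCont g t} \<inter> supp a = {}"
        by (rule no_disc[OF disc_finite[OF gV] inv_disc[OF Ha comm] Ha age]) (use supp_a in auto)
      have "isCont g t" if "0 < t" "t < r" for t
      proof (rule ccontr)
        assume "\<not> isCont g t"
        then have "t \<in> {t. 0 < t \<and> t < r \<and> \<not> isCont g t} \<inter> supp a" using that supp_a by simp
        then show False using D by blast
      qed
      then have "g \<in> F" by (rule toF[OF g])
      then show "g \<in> centralizer F {a}" using comm unfolding centralizer_def by auto
    qed
  qed
  define bk where "bk k = zpow a k \<circ> b \<circ> zpow a (- k)" for k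
  define al where "al k = zpow a k \<alpha>0" for k
  have Hbk: "Hom (bk k)" for k unfolding bk_def by (intro Hom_comp Hom_zpow Ha Hb)
  have bkge: "x \<le> bk k x" for k x
  proof -
    have "zpow a k (zpow a (- k) x) \<le> zpow a k (b (zpow a (- k) x))"
      using Hom_le[OF Hom_zpow[OF Ha]] bge by blast
    then show ?thesis unfolding bk_def using zpow_inverse[OF Ha] by simp
  qed
  have aal: "\<alpha>0 < a \<alpha>0"
  proof -
    have "\<alpha>0 \<in> supp a" using supp_a \<alpha>0' by simp
    then have "a \<alpha>0 \<noteq> \<alpha>0" unfolding supp_def by simp
    then show ?thesis using age[of \<alpha>0] by simp
  qed
  have supp_bk: "supp (bk k) = {al k<..<al (k + 1)}" for k
  proof -
    let ?p = "zpow a k" and ?q = "zpow a (- k)"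
    have pq: "?p (?q x) = x" for x using zpow_inverse[OF Ha] by simp
    have "x \<in> supp (bk k) \<longleftrightarrow> x \<in> {al k<..<al (k + 1)}" for x
    proof -
      have "x \<in> supp (bk k) \<longleftrightarrow> ?p (b (?q x)) \<noteq> ?p (?q x)" unfolding supp_def bk_def using pq by simp
      also have "\<dots> \<longleftrightarrow> ?q x \<in> supp b" unfolding supp_def using Hom_inj[OF Hom_zpow[OF Ha]] by simp
      also have "\<dots> \<longleftrightarrow> ?p \<alpha>0 < ?p (?q x) \<and> ?p (?q x) < ?p (a \<alpha>0)"
        using supp_b Hom_less[OF Hom_zpow[OF Ha]] by simp
      also have "\<dots> \<longleftrightarrow> x \<in> {al k<..<al (k + 1)}"
        unfolding al_def using pq zpow_succ[OF Ha] by simp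
      finally show ?thesis .
    qed
    then show ?thesis by (rule set_eqI)
  qed
  have al_bd: "0 < al k" "al k < r" for k
  proof -
    have "zpow a k 0 < zpow a k \<alpha>0" "zpow a k \<alpha>0 < zpow a k r"
      using Hom_less[OF Hom_zpow[OF Ha], of k 0 \<alpha>0] Hom_less[OF Hom_zpow[OF Ha], of k \<alpha>0 r] \<alpha>0' by simp_all
    then show "0 < al k" "al k < r" unfolding al_def using zpow_fix[OF Ha a0, of k] zpow_fix[OF Ha ar, of k] by simp_all
  qed
  have al_lt: "al k < al (k + 1)" for k
    unfolding al_def using zpow_succ[OF Ha, of k \<alpha>0] Hom_less[OF Hom_zpow[OF Ha], of k \<alpha>0 "a \<alpha>0"] aal by simp
  have P2: "centralizer G {bk k | k. True} = centralizer F {bk k | k. True}"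
  proof
    show "centralizer F {bk k | k. True} \<subseteq> centralizer G {bk k | k. True}" by (rule cent_sub)
    show "centralizer G {bk k | k. True} \<subseteq> centralizer F {bk k | k. True}"
    proof
      fix g assume gc: "g \<in> centralizer G {bk k | k. True}"
      then have g: "g \<in> G" and comm: "\<And>k. g \<circ> bk k = bk k \<circ> g" unfolding centralizer_def by auto
      have gV: "g \<in> Vgrp r {0<..} UNIV" using g GV by auto
      have ginj: "inj g" by (rule V_inj[OF gV])
      have "pw_affine r {0<..} UNIV g" using gV unfolding Vgrp_def by auto
      from pw_pieces[OF this] obtain S where S: "finite S" and
        P: "\<forall>t. 0 \<le> t \<and> t < r \<longrightarrow> (\<exists>s e l c. s \<le> t \<and> t < e \<and> e \<le> r
          \<and> (e \<in> S \<or> e = r) \<and> (t \<notin> S \<longrightarrow> s < t) \<and> (\<forall>u\<in>S. u \<le> t \<or> e \<le> u) \<and> l > 0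
          \<and> (\<forall>x. s \<le> x \<and> x < e \<longrightarrow> g x = l * x + c))" by auto
      have "isCont g t" if t: "0 < t" "t < r" for t
      proof -
        obtain k where k: "al k \<le> t" "t < al (k + 1)"
          using tiling[OF Ha age supp_a \<alpha>0' t] unfolding al_def by auto
        show ?thesis
        proof (cases "t = al k")
          case False
          then have tin: "t \<in> supp (bk k)" using k supp_bk by auto
          have sub: "supp (bk k) \<subseteq> {0<..<r}"
          proof
            fix x assume "x \<in> supp (bk k)"
            then have "al k < x" "x < al (k + 1)" using supp_bk[of k] by auto
            then show "x \<in> {0<..<r}" using al_bd(1)[of k] al_bd(2)[of "k+1"] by simp
          qed
          have "{t. 0 < t \<and> t < r \<and> \<not> isCont g t} \<inter> supp (bk k) = {}"
            by (rule no_disc[OF disc_finite[OF gV] inv_disc[OF Hbk comm sub] Hbk bkge])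
          show ?thesis
          proof (rule ccontr)
            assume "\<not> isCont g t"
            then have "t \<in> {t. 0 < t \<and> t < r \<and> \<not> isCont g t} \<inter> supp (bk k)" using tin t by simp
            then show False using \<open>{t. 0 < t \<and> t < r \<and> \<not> isCont g t} \<inter> supp (bk k) = {}\<close> by blast
          qed
        next
          case True
          have s1: "supp (bk (k - 1)) = {al (k - 1)<..<al k}" using supp_bk[of "k - 1"] by simp
          have l1: "al (k - 1) < al k" using al_lt[of "k - 1"] by simp
          show ?thesis unfolding True
            by (rule alpha_cont[OF S P al_bd(1) l1 al_lt less_imp_le[OF al_bd(2)] ginj
                  Hbk s1 comm Hbk supp_bk comm])
        qed
      qed
      then have "g \<in> F" using toF[OF g] by auto
      then show "g \<in> centralizer F {bk k | k. True}" using gc unfolding centralizer_def by auto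
    qed
  qed
  show ?thesis using P1 P2 unfolding F_def bk_def by simp
qed


end
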